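(* Let $G=(V,E)$ be a finite graph satisfying the $CDE(n,-K)$ condition for some constants $n>0$, $K>0$, and let $u:V\times[0,+\infty)\to(0,+\infty)$ be a positive solution of the heat equation $\partial_t u=\Delta u$ on $V$. Then $$\frac{\Gamma(\sqrt{u})}{u}-\frac{\partial_{t}(\sqrt{u})}{\sqrt{u}}\leq \frac{n}{2t}+\sqrt{\tfrac{1}{2}nKD_{\mu}(D_{w}+1)}\qquad\text{for all } t>0 \text{ and all vertices}.$$
   Context: Graphs: $G=(V,E)$ is a connected, locally finite graph; each edge $xy$ carries a weight $w_{xy}>0$ (possibly $w_{xy}\neq w_{yx}$), and $\mu:V\to(0,\infty)$ is a vertex measure. Write $y\sim x$ if $xy\in E$, $\deg(x)=\sum_{y\sim x}w_{xy}<\infty$, $D_\mu=\sup_{x\in V}\deg(x)/\mu(x)$, $D_w=\sup_{x\sim y}\deg(x)/w_{xy}$. The Laplacian is $\Delta f(x)=\frac{1}{\mu(x)}\sum_{y\sim x}w_{xy}(f(y)-f(x))$. The gradient forms are $2\Gamma(f,g)=\Delta(fg)-f\Delta g-g\Delta f$, $2\Gamma_2(f,g)=\Delta\Gamma(f,g)-\Gamma(f,\Delta g)-\Gamma(\Delta f,g)$, $\Gamma(f)=\Gamma(f,f)$, $\Gamma_2(f)=\Gamma_2(f,f)$. The graph satisfies $CDE(n,K)$ ($n>0$, $K\in\mathbb R$) if for every $f:V\to(0,\infty)$ and every vertex, $\widetilde\Gamma_2(f)\ge\frac1n(\Delta f)^2+K\Gamma(f)$, where $\widetilde\Gamma_2(f)=\Gamma_2(f)-\Gamma\big(f,\frac{\Gamma(f)}{f}\big)$.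 A positive solution of the heat equation on a set $U\subset V$ is a function $u:V\times[0,\infty)\to(0,\infty)$, continuously differentiable in $t$, with $\partial_t u(x,t)=\Delta u(\cdot,t)(x)$ for all $x\in U$, $t\ge 0$; here $\sqrt u$, $\Gamma(\sqrt u)$ etc. are taken at each fixed time. *)

theory Defs
  imports "HOL-Analysis.Analysis"
begin

text \<open>A weighted graph: vertex set V (finite), symmetric irreflexive adjacency E,
  edge weights w x y (positive on edges, not necessarily symmetric), vertex measure mu.\<close>

definition nbrs :: "('v \<Rightarrow> 'v \<Rightarrow> bool) \<Rightarrow> 'v set \<Rightarrow> 'v \<Rightarrow> 'v set" where
  "nbrs E V x = {y \<in> V. E x y}"

definition graph_deg :: "'v set \<Rightarrow> ('v \<Rightarrow> 'v \<Rightarrow> bool) \<Rightarrow> ('v \<Rightarrow> 'v \<Rightarrow> real) \<Rightarrow> 'v \<Rightarrow> real" where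
  "graph_deg V E w x = (\<Sum>y\<in>nbrs E V x. w x y)"

definition laplacian :: "'v set \<Rightarrow> ('v \<Rightarrow> 'v \<Rightarrow> bool) \<Rightarrow> ('v \<Rightarrow> 'v \<Rightarrow> real) \<Rightarrow> ('v \<Rightarrow> real)
    \<Rightarrow> ('v \<Rightarrow> real) \<Rightarrow> 'v \<Rightarrow> real" where
  "laplacian V E w mu f x = (1 / mu x) * (\<Sum>y\<in>nbrs E V x. w x y * (f y - f x))"

definition Gam :: "'v set \<Rightarrow> ('v \<Rightarrow> 'v \<Rightarrow> bool) \<Rightarrow> ('v \<Rightarrow> 'v \<Rightarrow> real) \<Rightarrow> ('v \<Rightarrow> real)
    \<Rightarrow> ('v \<Rightarrow> real) \<Rightarrow> ('v \<Rightarrow> real) \<Rightarrow> 'v \<Rightarrow> real" where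
  "Gam V E w mu f g x = (laplacian V E w mu (\<lambda>y. f y * g y) x
      - f x * laplacian V E w mu g x - g x * laplacian V E w mu f x) / 2"

definition Gam2 :: "'v set \<Rightarrow> ('v \<Rightarrow> 'v \<Rightarrow> bool) \<Rightarrow> ('v \<Rightarrow> 'v \<Rightarrow> real) \<Rightarrow> ('v \<Rightarrow> real)
    \<Rightarrow> ('v \<Rightarrow> real) \<Rightarrow> ('v \<Rightarrow> real) \<Rightarrow> 'v \<Rightarrow> real" where
  "Gam2 V E w mu f g x = (laplacian V E w mu (Gam V E w mu f g) x
      - Gam V E w mu f (laplacian V E w mu g) x - Gam V E w mu (laplacian V E w mu f) g x) / 2"

definition Gam2_tilde :: "'v set \<Rightarrow> ('v \<Rightarrow> 'v \<Rightarrow> bool) \<Rightarrow> ('v \<Rightarrow> 'v \<Rightarrow> real) \<Rightarrow> ('v \<Rightarrow> real)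
    \<Rightarrow> ('v \<Rightarrow> real) \<Rightarrow> 'v \<Rightarrow> real" where
  "Gam2_tilde V E w mu f x = Gam2 V E w mu f f x
      - Gam V E w mu f (\<lambda>y. Gam V E w mu f f y / f y) x"

definition CDE :: "'v set \<Rightarrow> ('v \<Rightarrow> 'v \<Rightarrow> bool) \<Rightarrow> ('v \<Rightarrow> 'v \<Rightarrow> real) \<Rightarrow> ('v \<Rightarrow> real)
    \<Rightarrow> real \<Rightarrow> real \<Rightarrow> bool" where
  "CDE V E w mu n K \<longleftrightarrow> (\<forall>f. (\<forall>x\<in>V. f x > 0) \<longrightarrow>
     (\<forall>x\<in>V. Gam2_tilde V E w mu f x \<ge> (1 / n) * (laplacian V E w mu f x)\<^sup>2 + K * Gam V E w mu f f x))"

definition D_mu :: "'v set \<Rightarrow> ('v \<Rightarrow> 'v \<Rightarrow> bool) \<Rightarrow> ('v \<Rightarrow> 'v \<Rightarrow> real) \<Rightarrow> ('v \<Rightarrow> real) \<Rightarrow> real" where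
  "D_mu V E w mu = (let S = {graph_deg V E w x / mu x | x. x \<in> V} in if S = {} then 0 else Max S)"

definition D_w :: "'v set \<Rightarrow> ('v \<Rightarrow> 'v \<Rightarrow> bool) \<Rightarrow> ('v \<Rightarrow> 'v \<Rightarrow> real) \<Rightarrow> real" where
  "D_w V E w = (let S = {graph_deg V E w x / w x y | x y. x \<in> V \<and> y \<in> V \<and> E x y}
                in if S = {} then 0 else Max S)"

definition weighted_graph :: "'v set \<Rightarrow> ('v \<Rightarrow> 'v \<Rightarrow> bool) \<Rightarrow> ('v \<Rightarrow> 'v \<Rightarrow> real) \<Rightarrow> ('v \<Rightarrow> real) \<Rightarrow> bool" where
  "weighted_graph V E w mu \<longleftrightarrow>
     (\<forall>x y. E x y \<longrightarrow> x \<in> V \<and> y \<in> V) \<and>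
     (\<forall>x y. E x y \<longrightarrow> E y x) \<and> (\<forall>x. \<not> E x x) \<and>
     (\<forall>x y. E x y \<longrightarrow> w x y > 0) \<and> (\<forall>x\<in>V. mu x > 0) \<and>
     (\<forall>x\<in>V. \<forall>y\<in>V. E\<^sup>*\<^sup>* x y)"

end

theory Submission imports Defs begin

lemma Gam_eq:
  "Gam V E w mu f g x = (\<Sum>y\<in>nbrs E V x. w x y * (f y - f x) * (g y - g x)) / (2 * mu x)"
proof -
  have "(\<Sum>y\<in>nbrs E V x. w x y * (f y * g y - f x * g x))
       - f x * (\<Sum>y\<in>nbrs E V x. w x y * (g y - g x))
       - g x * (\<Sum>y\<in>nbrs E V x. w x y * (f y - f x))
       = (\<Sum>y\<in>nbrs E V x. w x y * (f y - f x) * (g y - g x))"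
    unfolding sum_distrib_left sum_subtractf[symmetric] by (rule sum.cong) (auto simp: algebra_simps)
  moreover have "\<And>a b c m fx gx::real. ((1/m)*a - fx*((1/m)*b) - gx*((1/m)*c))/2 = (a - fx*b - gx*c)/(2*m)"
    by (case_tac "m=0") (simp_all add: field_simps)
  ultimately show ?thesis unfolding Gam_def laplacian_def
    by metis
qed

lemma lap_cong:
  assumes "\<And>y. y \<in> V \<Longrightarrow> f y = g y" "x \<in> V"
  shows "laplacian V E w mu f x = laplacian V E w mu g x"
  unfolding laplacian_def nbrs_def using assms by (auto intro!: sum.cong)

lemma Gam_cong:
  assumes "\<And>y. y \<in> V \<Longrightarrow> f y = f' y" "\<And>y. y \<in> V \<Longrightarrow> g y = g' y" "x \<in> V"
  shows "Gam V E w mu f g x = Gam V E w mu f' g' x"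
  unfolding Gam_eq nbrs_def using assms by (auto intro!: sum.cong arg_cong2[where f="(/)"])

lemma lap_diff:
  "laplacian V E w mu (\<lambda>y. f y - g y) x = laplacian V E w mu f x - laplacian V E w mu g x"
proof -
  have "(\<Sum>y\<in>nbrs E V x. w x y * (f y - g y - (f x - g x))) = (\<Sum>y\<in>nbrs E V x. w x y * (f y - f x)) - (\<Sum>y\<in>nbrs E V x. w x y * (g y - g x))"
    unfolding sum_subtractf[symmetric] by (rule sum.cong) (auto simp: algebra_simps)
  then show ?thesis unfolding laplacian_def by (simp only: right_diff_distrib)
qed

lemma Gam_add2:
  "Gam V E w mu f (\<lambda>y. g y + h y) x = Gam V E w mu f g x + Gam V E w mu f h x"
  unfolding Gam_eq by (simp add: sum.distrib[symmetric] algebra_simps add_divide_distrib[symmetric])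

lemma Gam_sym: "Gam V E w mu f g x = Gam V E w mu g f x"
  unfolding Gam_eq by (simp add: algebra_simps)

lemma Gam2_tilde_id:
  assumes pos: "\<And>y. y \<in> V \<Longrightarrow> f y > 0" and x: "x \<in> V"
    and p_def: "\<And>y. p y = laplacian V E w mu f y + Gam V E w mu f f y / f y"
  shows "2 * Gam2_tilde V E w mu f x = f x * laplacian V E w mu p x + p x * laplacian V E w mu f x
          - laplacian V E w mu (\<lambda>y. f y * laplacian V E w mu f y) x"
proof -
  let ?L = "laplacian V E w mu" and ?G = "Gam V E w mu"
  have a: "?G f (?L f) x + ?G f (\<lambda>y. ?G f f y / f y) x = ?G f p x"
    using Gam_add2[of V E w mu f "laplacian V E w mu f" "\<lambda>y. Gam V E w mu f f y / f y" x] p_def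
    by (metis (no_types, lifting) ext)
  have b: "?L (?G f f) x = ?L (\<lambda>y. f y * p y) x - ?L (\<lambda>y. f y * ?L f y) x"
  proof -
    have "?L (?G f f) x = ?L (\<lambda>y. f y * p y - f y * ?L f y) x"
      apply (rule lap_cong[OF _ x])
      subgoal for y using pos[of y] unfolding p_def by (simp add: field_simps)
      done
    then show ?thesis by (simp add: lap_diff)
  qed
  have c: "?L (\<lambda>y. f y * p y) x = f x * ?L p x + p x * ?L f x + 2 * ?G f p x"
    unfolding Gam_def by (simp add: field_simps)
  have d: "2 * Gam2_tilde V E w mu f x = ?L (?G f f) x - 2 * ?G f (?L f) x - 2 * ?G f (\<lambda>y. ?G f f y / f y) x"
    unfolding Gam2_tilde_def Gam2_def using Gam_sym[of V E w mu "?L f" f x] by simp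
  show ?thesis using a b c d by linarith
qed


lemma nbrs_sub: "nbrs E V x \<subseteq> V" unfolding nbrs_def by auto

lemma deg_nonneg:
  assumes "weighted_graph V E w mu"
  shows "graph_deg V E w x \<ge> 0"
  unfolding graph_deg_def
proof (intro sum_nonneg)
  fix y assume "y \<in> nbrs E V x"
  then show "0 \<le> w x y" using assms unfolding weighted_graph_def nbrs_def by (auto intro: less_imp_le)
qed

lemma D_mu_ge:
  assumes "finite V" "x \<in> V"
  shows "graph_deg V E w x / mu x \<le> D_mu V E w mu"
proof -
  let ?S = "{graph_deg V E w x / mu x | x. x \<in> V}"
  have "?S = (\<lambda>x. graph_deg V E w x / mu x) ` V" by auto
  then have fin: "finite ?S" using assms by simp
  have "graph_deg V E w x / mu x \<in> ?S" using assms by auto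
  then show ?thesis unfolding D_mu_def Let_def using fin by (auto intro: Max_ge)
qed

lemma D_w_ge:
  assumes "finite V" "x \<in> V" "y \<in> V" "E x y"
  shows "graph_deg V E w x / w x y \<le> D_w V E w"
proof -
  let ?S = "{graph_deg V E w x / w x y | x y. x \<in> V \<and> y \<in> V \<and> E x y}"
  have "?S \<subseteq> (\<lambda>(x,y). graph_deg V E w x / w x y) ` (V \<times> V)" by auto
  moreover have "finite ((\<lambda>(x,y). graph_deg V E w x / w x y) ` (V \<times> V))" using assms(1) by simp
  ultimately have fin: "finite ?S" by (rule finite_subset)
  have "graph_deg V E w x / w x y \<in> ?S" using assms by auto
  then show ?thesis unfolding D_w_def Let_def using fin by (auto intro: Max_ge)
qed

lemma D_w_nonneg:
  assumes "finite V" "weighted_graph V E w mu"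
  shows "D_w V E w \<ge> 0"
proof (cases "{graph_deg V E w x / w x y | x y. x \<in> V \<and> y \<in> V \<and> E x y} = {}")
  case True then show ?thesis unfolding D_w_def Let_def by simp
next
  case False
  then obtain x y where "x \<in> V" "y \<in> V" "E x y" by auto
  moreover have "graph_deg V E w x / w x y \<ge> 0"
    using deg_nonneg[OF assms(2)] assms(2) \<open>E x y\<close> unfolding weighted_graph_def
    by (metis divide_nonneg_pos)
  ultimately show ?thesis using D_w_ge[OF assms(1)] by (meson order_trans)
qed

lemma Gam_bound:
  assumes fin: "finite V" and g: "weighted_graph V E w mu"
    and pos: "\<And>y. y \<in> V \<Longrightarrow> f y > 0" and x: "x \<in> V"
    and neg: "laplacian V E w mu f x \<le> 0"
  shows "Gam V E w mu f f x \<le> (f x)\<^sup>2 * (D_mu V E w mu * (D_w V E w + 1)) / 2"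
proof -
  let ?N = "nbrs E V x" and ?d = "graph_deg V E w x" and ?Dw = "D_w V E w"
  define a where "a = f x"
  have a: "a > 0" using pos x a_def by auto
  have mu: "mu x > 0" using g x unfolding weighted_graph_def by auto
  have wpos: "\<And>y. y \<in> ?N \<Longrightarrow> w x y > 0" using g unfolding weighted_graph_def nbrs_def by auto
  have finN: "finite ?N" using finite_subset[OF nbrs_sub fin] .
  have fpos: "\<And>y. y \<in> ?N \<Longrightarrow> f y > 0" using pos nbrs_sub[of E V x] by blast
  have s0: "(\<Sum>y\<in>?N. w x y * (f y - a)) \<le> 0"
  proof -
    have e: "(\<Sum>y\<in>?N. w x y * (f y - a)) = mu x * laplacian V E w mu f x"
      unfolding laplacian_def a_def using mu by simp
    show ?thesis unfolding e using mu neg by (simp add: mult_nonneg_nonpos)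
  qed
  have deq: "?d = (\<Sum>y\<in>?N. w x y)" unfolding graph_deg_def by simp
  have "(\<Sum>y\<in>?N. w x y * (f y - a)) = (\<Sum>y\<in>?N. w x y * f y) - a * ?d"
    unfolding deq sum_distrib_left sum_subtractf[symmetric] by (rule sum.cong) (auto simp: algebra_simps)
  then have s1: "(\<Sum>y\<in>?N. w x y * f y) \<le> a * ?d" using s0 by linarith
  have fy: "f y \<le> a * ?Dw" if y: "y \<in> ?N" for y
  proof -
    have "w x y * f y \<le> (\<Sum>y\<in>?N. w x y * f y)"
      using member_le_sum[OF y, of "\<lambda>y. w x y * f y"] finN wpos fpos
      by (simp add: less_imp_le)
    then have "w x y * f y \<le> a * ?d" using s1 by linarith
    then have "f y \<le> a * ?d / w x y" using wpos[OF y] by (simp add: field_simps)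
    also have "\<dots> = a * (?d / w x y)" by simp
    also have "\<dots> \<le> a * ?Dw"
    proof -
      have "y \<in> V" "E x y" using y unfolding nbrs_def by auto
      then have "?d / w x y \<le> ?Dw" using D_w_ge[OF fin x] by blast
      then show ?thesis using a mult_left_mono[of "?d / w x y" ?Dw a] by simp
    qed
    finally show ?thesis .
  qed
  have "(\<Sum>y\<in>?N. w x y * (f y - a) * (f y - a)) \<le> (\<Sum>y\<in>?N. a * ?Dw * (w x y * f y) + a\<^sup>2 * w x y)"
  proof (rule sum_mono)
    fix y assume y: "y \<in> ?N"
    have "w x y * f y * f y \<le> w x y * f y * (a * ?Dw)"
      using fy[OF y] wpos[OF y] fpos[OF y] by (intro mult_left_mono) auto
    moreover have "0 \<le> a * (w x y * f y)" using a wpos[OF y] fpos[OF y] by simp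
    ultimately show "w x y * (f y - a) * (f y - a) \<le> a * ?Dw * (w x y * f y) + a\<^sup>2 * w x y"
      by (simp add: algebra_simps power2_eq_square)
  qed
  also have "\<dots> = a * ?Dw * (\<Sum>y\<in>?N. w x y * f y) + a\<^sup>2 * ?d"
    unfolding deq by (simp add: sum.distrib sum_distrib_left)
  also have "\<dots> \<le> a * ?Dw * (a * ?d) + a\<^sup>2 * ?d"
    using s1 a D_w_nonneg[OF fin g] by (intro add_right_mono mult_left_mono) auto
  finally have S: "(\<Sum>y\<in>?N. w x y * (f y - a) * (f y - a)) \<le> a\<^sup>2 * (?Dw + 1) * ?d"
    by (simp add: algebra_simps power2_eq_square)
  have "Gam V E w mu f f x = (\<Sum>y\<in>?N. w x y * (f y - a) * (f y - a)) / (2 * mu x)"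
    unfolding Gam_eq a_def by simp
  also have "\<dots> \<le> a\<^sup>2 * (?Dw + 1) * ?d / (2 * mu x)"
    using S mu by (simp add: divide_right_mono)
  also have "\<dots> = a\<^sup>2 * (?Dw + 1) * (?d / mu x) / 2" by simp
  also have "\<dots> \<le> a\<^sup>2 * (?Dw + 1) * D_mu V E w mu / 2"
    using D_mu_ge[OF fin x, of E w mu] D_w_nonneg[OF fin g]
    by (intro divide_right_mono mult_left_mono) auto
  finally show ?thesis unfolding a_def by (simp add: algebra_simps)
qed

theorem mainTheorem1:
  fixes V :: "'v set" and E :: "'v \<Rightarrow> 'v \<Rightarrow> bool" and w :: "'v \<Rightarrow> 'v \<Rightarrow> real"
    and mu :: "'v \<Rightarrow> real" and n K :: real
    and u ut :: "'v \<Rightarrow> real \<Rightarrow> real"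
  assumes fin: "finite V"
    and graph: "weighted_graph V E w mu"
    and n_pos: "n > 0" and K_pos: "K > 0"
    and cde: "CDE V E w mu n (- K)"
    and u_pos: "\<And>x t. x \<in> V \<Longrightarrow> t \<ge> 0 \<Longrightarrow> u x t > 0"
    and u_deriv: "\<And>x t. x \<in> V \<Longrightarrow> t \<ge> 0 \<Longrightarrow>
                    ((\<lambda>s. u x s) has_real_derivative ut x t) (at t within {0..})"
    and ut_cont: "\<And>x. x \<in> V \<Longrightarrow> continuous_on {0..} (ut x)"
    and heat: "\<And>x t. x \<in> V \<Longrightarrow> t \<ge> 0 \<Longrightarrow> ut x t = laplacian V E w mu (\<lambda>y. u y t) x"
  shows "\<forall>t>0. \<forall>x\<in>V.
     Gam V E w mu (\<lambda>y. sqrt (u y t)) (\<lambda>y. sqrt (u y t)) x / u x t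
       - deriv (\<lambda>s. sqrt (u x s)) t / sqrt (u x t)
     \<le> n / (2 * t) + sqrt (1/2 * n * K * D_mu V E w mu * (D_w V E w + 1))"
proof (intro allI impI ballI)
  fix T :: real and x0 assume T: "T > 0" and x0: "x0 \<in> V"
  let ?L = "laplacian V E w mu" and ?G = "Gam V E w mu"
  define F where "F = (\<lambda>s y. sqrt (u y s))"
  define Q where "Q = (\<lambda>y s. F s y * ?L (F s) y)"
  define H where "H = (\<lambda>y s. - s * Q y s / u y s)"
  define C where "C = D_mu V E w mu * (D_w V E w + 1)"
  define B where "B = 1/2 * n * K * D_mu V E w mu * (D_w V E w + 1)"
  have mupos: "\<And>y. y\<in>V \<Longrightarrow> mu y > 0" using graph unfolding weighted_graph_def by auto
  have finN: "\<And>y. finite (nbrs E V y)" using finite_subset[OF nbrs_sub fin] by blast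
  have Dw0: "D_w V E w \<ge> 0" using D_w_nonneg[OF fin graph] .
  have Dmu0: "D_mu V E w mu \<ge> 0"
    using D_mu_ge[OF fin x0, of E w mu] deg_nonneg[OF graph, of x0] mupos[OF x0]
    by (meson divide_nonneg_pos order_trans)
  have C0: "C \<ge> 0" unfolding C_def using Dw0 Dmu0 by simp
  have B0: "B \<ge> 0" unfolding B_def using Dw0 Dmu0 n_pos K_pos by simp
  have BC: "B = n * K * C / 2" unfolding B_def C_def by simp
  have du: "((\<lambda>s. u y s) has_real_derivative ut y s) (at s)" if "y \<in> V" "s > 0" for y s
  proof -
    have "((\<lambda>s. u y s) has_real_derivative ut y s) (at s within {0..})" using u_deriv that by auto
    moreover have "at s within {0..} = at s"
      using that by (intro at_within_interior) (simp add: interior_Ici[of "-1"])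
    ultimately show ?thesis by simp
  qed
  have dsq: "((\<lambda>s. sqrt (u y s)) has_real_derivative ut y s / (2 * sqrt (u y s))) (at s)"
    if "y \<in> V" "s > 0" for y s
  proof -
    have up: "u y s > 0" using u_pos that by auto
    have eq: "inverse (sqrt (u y s)) / 2 * ut y s = ut y s / (2 * sqrt (u y s))"
      by (simp add: field_simps)
    show ?thesis using DERIV_chain2[OF DERIV_real_sqrt[OF up] du[OF that]] eq by (simp add: mult.commute)
  qed
  have cu: "continuous_on {0..T} (u y)" if "y \<in> V" for y
  proof -
    have "continuous_on {0..} (u y)"
      by (rule DERIV_continuous_on[where D="ut y"]) (use u_deriv that in auto)
    then show ?thesis by (rule continuous_on_subset) auto
  qed
  have cH: "continuous_on {0..T} (H y)" if y: "y \<in> V" for y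
  proof -
    have nz: "\<forall>s\<in>{0..T}. u y s \<noteq> 0" using u_pos y by (metis atLeastAtMost_iff less_irrefl)
    have cz: "\<And>z. z \<in> nbrs E V y \<Longrightarrow> continuous_on {0..T} (u z)"
      using cu nbrs_sub[of E V y] by blast
    show ?thesis unfolding H_def Q_def F_def laplacian_def
      by (intro continuous_intros cu y cz nz)
  qed
  have "\<forall>y\<in>V. \<exists>s\<in>{0..T}. \<forall>r\<in>{0..T}. H y r \<le> H y s"
    using continuous_attains_sup[OF compact_Icc _ cH] T by auto
  then obtain sf where sf: "\<forall>y\<in>V. sf y \<in> {0..T} \<and> (\<forall>r\<in>{0..T}. H y r \<le> H y (sf y))"
    by metis
  let ?M = "(\<lambda>y. H y (sf y)) ` V"
  have "finite ?M" "?M \<noteq> {}" using fin x0 by auto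
  then have "Max ?M \<in> ?M" by (rule Max_in)
  then obtain xs where xs: "xs \<in> V" "H xs (sf xs) = Max ?M" by auto
  define t where "t = sf xs"
  define h where "h = H xs t"
  have hmax: "H y r \<le> h" if "y \<in> V" "r \<in> {0..T}" for y r
  proof -
    have "H y r \<le> H y (sf y)" using sf that by auto
    also have "\<dots> \<le> Max ?M" using \<open>finite ?M\<close> that by auto
    finally show ?thesis unfolding h_def t_def using xs by simp
  qed
  have t0: "0 \<le> t" "t \<le> T" using sf xs unfolding t_def by auto
  have H0T: "H x0 T \<le> h" using hmax x0 T by auto
  have key: "H x0 T \<le> n / 2 + T * sqrt B"
  proof (cases "h \<le> 0")
    case True
    have "0 \<le> T * sqrt B" using B0 T by simp
    then show ?thesis using H0T n_pos True by linarith
  next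
    case False
    then have hpos: "h > 0" by simp
    have tpos: "t > 0"
    proof (rule ccontr)
      assume "\<not> t > 0" then have "t = 0" using t0 by simp
      then have "h = 0" unfolding h_def H_def by simp
      then show False using hpos by simp
    qed
    define f where "f = F t"
    define p where "p = (\<lambda>y. ?L f y + ?G f f y / f y)"
    have fpos: "\<And>y. y \<in> V \<Longrightarrow> f y > 0" unfolding f_def F_def using u_pos t0 by auto
    have ff: "\<And>y. y \<in> V \<Longrightarrow> f y * f y = u y t" unfolding f_def F_def using u_pos t0
      by (simp add: less_imp_le)
    have Lu: "?L (\<lambda>y. f y * f y) y = ut y t" if "y \<in> V" for y
    proof -
      have "?L (\<lambda>y. f y * f y) y = ?L (\<lambda>y. u y t) y" by (rule lap_cong[OF ff that])
      then show ?thesis using heat[OF that t0(1)] by simp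
    qed
    have p_eq: "p y = ut y t / (2 * f y)" if y: "y \<in> V" for y
    proof -
      have "?G f f y = (ut y t - 2 * f y * ?L f y) / 2" unfolding Gam_def using Lu[OF y] by simp
      then show ?thesis unfolding p_def using fpos[OF y] by (simp add: field_simps)
    qed
    have dsp: "((\<lambda>s. sqrt (u y s)) has_real_derivative p y) (at t)" if "y \<in> V" for y
      using dsq[OF that tpos] p_eq[OF that] unfolding f_def F_def by simp
    have dL: "((\<lambda>s. (1 / mu xs) * (\<Sum>z\<in>nbrs E V xs. w xs z * (sqrt (u z s) - sqrt (u xs s))))
        has_real_derivative (1 / mu xs) * (\<Sum>z\<in>nbrs E V xs. w xs z * (p z - p xs))) (at t)"
    proof -
      have "((\<lambda>s. w xs z * (sqrt (u z s) - sqrt (u xs s))) has_real_derivative w xs z * (p z - p xs)) (at t)"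
        if "z \<in> nbrs E V xs" for z
      proof -
        have "z \<in> V" using that nbrs_sub[of E V xs] by blast
        show ?thesis by (rule DERIV_cmult, rule DERIV_diff, rule dsp[OF \<open>z\<in>V\<close>], rule dsp[OF xs(1)])
      qed
      then show ?thesis by (rule DERIV_cmult[OF DERIV_sum])
    qed
    define Dq where "Dq = p xs * ?L f xs + f xs * ?L p xs"
    have dq: "((\<lambda>s. Q xs s) has_real_derivative Dq) (at t)"
    proof -
      have "((\<lambda>s. sqrt (u xs s) * ((1 / mu xs) * (\<Sum>z\<in>nbrs E V xs. w xs z * (sqrt (u z s) - sqrt (u xs s)))))
        has_real_derivative p xs * ((1 / mu xs) * (\<Sum>z\<in>nbrs E V xs. w xs z * (sqrt (u z t) - sqrt (u xs t))))
          + (1 / mu xs) * (\<Sum>z\<in>nbrs E V xs. w xs z * (p z - p xs)) * sqrt (u xs t)) (at t)"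
        by (rule DERIV_mult[OF dsp[OF xs(1)] dL])
      then show ?thesis unfolding Dq_def Q_def F_def f_def laplacian_def by (simp add: algebra_simps)
    qed
    have Uxs: "u xs t > 0" using u_pos xs t0 by auto
    have hdef: "h * u xs t = - t * Q xs t" unfolding h_def H_def using Uxs by simp
    have dphi: "((\<lambda>s. - s * Q xs s - h * u xs s) has_real_derivative
                 (-1) * Q xs t + Dq * (- t) - h * ut xs t) (at t)"
      by (intro DERIV_diff DERIV_mult DERIV_cmult DERIV_minus DERIV_ident dq du xs tpos)
    have timeineq: "(-1) * Q xs t + Dq * (- t) - h * ut xs t \<ge> 0"
    proof (rule ccontr)
      assume "\<not> ?thesis"
      then obtain d where d: "d > 0" "\<forall>k>0. k < d \<longrightarrow>
          (- t * Q xs t - h * u xs t) < (- (t - k) * Q xs (t - k) - h * u xs (t - k))"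
        using DERIV_neg_dec_left[OF dphi] by auto
      define k where "k = min d t / 2"
      have k: "k > 0" "k < d" "k \<le> t" using d tpos unfolding k_def by auto
      have lt: "(- t * Q xs t - h * u xs t) < (- (t - k) * Q xs (t - k) - h * u xs (t - k))"
        using d k by auto
      have r: "t - k \<in> {0..T}" using k t0 by auto
      have ur: "u xs (t - k) > 0" using u_pos xs r by auto
      have "H xs (t - k) \<le> h" using hmax[OF xs(1) r] .
      then have "- (t - k) * Q xs (t - k) \<le> h * u xs (t - k)"
        unfolding H_def using ur by (simp add: divide_le_eq)
      then show False using lt hdef by linarith
    qed
    have spatial: "t * ?L (\<lambda>y. f y * ?L f y) xs \<ge> - h * ?L (\<lambda>y. u y t) xs"
    proof -
      let ?N = "nbrs E V xs"
      have QQ: "\<And>y. Q y t = f y * ?L f y" unfolding Q_def f_def by simp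
      have trm: "w xs z * (- h * (u z t - u xs t)) \<le> w xs z * (t * (Q z t - Q xs t))"
        if z: "z \<in> ?N" for z
      proof -
        have zV: "z \<in> V" "E xs z" using z unfolding nbrs_def by auto
        have wz: "w xs z > 0" using graph zV unfolding weighted_graph_def by auto
        have uz: "u z t > 0" using u_pos zV t0 by auto
        have "H z t \<le> h" using hmax zV t0 by auto
        then have "(- t * Q z t) / u z t \<le> h" unfolding H_def .
        then have "- t * Q z t \<le> h * u z t" using pos_divide_le_eq[OF uz] by blast
        then have "- h * (u z t - u xs t) \<le> t * (Q z t - Q xs t)" using hdef
          by (simp add: algebra_simps)
        then show ?thesis using wz mult_left_mono[of "- h * (u z t - u xs t)" "t * (Q z t - Q xs t)" "w xs z"] by simp
      qed
      have "(\<Sum>z\<in>?N. w xs z * (- h * (u z t - u xs t))) \<le> (\<Sum>z\<in>?N. w xs z * (t * (Q z t - Q xs t)))"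
        by (rule sum_mono) (rule trm)
      moreover have "(\<Sum>z\<in>?N. w xs z * (- h * (u z t - u xs t))) = - h * (\<Sum>z\<in>?N. w xs z * (u z t - u xs t))"
        by (simp add: sum_distrib_left algebra_simps)
      moreover have "(\<Sum>z\<in>?N. w xs z * (t * (Q z t - Q xs t))) = t * (\<Sum>z\<in>?N. w xs z * (Q z t - Q xs t))"
        by (simp add: sum_distrib_left algebra_simps)
      ultimately have "- h * (\<Sum>z\<in>?N. w xs z * (u z t - u xs t)) \<le> t * (\<Sum>z\<in>?N. w xs z * (Q z t - Q xs t))"
        by simp
      then have "(1 / mu xs) * (- h * (\<Sum>z\<in>?N. w xs z * (u z t - u xs t))) \<le> (1 / mu xs) * (t * (\<Sum>z\<in>?N. w xs z * (Q z t - Q xs t)))"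
        using mupos[OF xs(1)] by (intro mult_left_mono) auto
      moreover have eqQ: "?L (\<lambda>y. f y * ?L f y) xs = ?L (\<lambda>y. Q y t) xs" unfolding QQ ..
      ultimately show ?thesis unfolding eqQ unfolding laplacian_def by (simp add: algebra_simps)
    qed
    have ident: "2 * Gam2_tilde V E w mu f xs = f xs * ?L p xs + p xs * ?L f xs - ?L (\<lambda>y. f y * ?L f y) xs"
    proof (rule Gam2_tilde_id[OF fpos xs(1)])
      fix y show "p y = ?L f y + ?G f f y / f y" unfolding p_def by (rule refl)
    qed
    have cdex: "Gam2_tilde V E w mu f xs \<ge> (1 / n) * (?L f xs)\<^sup>2 + (- K) * ?G f f xs"
      using cde fpos xs(1) unfolding CDE_def by blast
    have Qx: "Q xs t = f xs * ?L f xs" unfolding Q_def f_def by simp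
    have Lfneg: "?L f xs \<le> 0"
    proof -
      have "h * u xs t > 0" using hpos Uxs by simp
      then have "t * (f xs * ?L f xs) < 0" using hdef Qx by simp
      then have "f xs * ?L f xs < 0" using tpos by (simp add: mult_less_0_iff)
      then show ?thesis using fpos[OF xs(1)] by (simp add: mult_less_0_iff)
    qed
    have gb: "?G f f xs \<le> (f xs)\<^sup>2 * C / 2"
      using Gam_bound[OF fin graph fpos xs(1) Lfneg] unfolding C_def .
    define U where "U = u xs t"
    define X where "X = Gam2_tilde V E w mu f xs"
    define LQ where "LQ = ?L (\<lambda>y. f y * ?L f y) xs"
    define Lu' where "Lu' = ?L (\<lambda>y. u y t) xs"
    define Lf where "Lf = ?L f xs"
    define G where "G = ?G f f xs"
    have U0: "U > 0" unfolding U_def using Uxs .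
    have fU: "(f xs)\<^sup>2 = U" unfolding U_def using ff[OF xs(1)] by (simp add: power2_eq_square)
    have utLu: "ut xs t = Lu'" unfolding Lu'_def using heat[OF xs(1) t0(1)] by simp
    have e1: "2 * X = Dq - LQ" unfolding X_def Dq_def LQ_def using ident by simp
    have e2: "- Q xs t - Dq * t - h * Lu' \<ge> 0" using timeineq utLu by simp
    have e3: "t * LQ \<ge> - h * Lu'" using spatial unfolding LQ_def Lu'_def .
    have e4: "X \<ge> (1 / n) * Lf\<^sup>2 - K * G" using cdex unfolding X_def Lf_def G_def by simp
    have e5: "G \<le> U * C / 2" using gb fU unfolding G_def by simp
    have e6: "h * U = - t * (f xs * Lf)" using hdef Qx unfolding U_def Lf_def by simp
    have stepA: "t\<^sup>2 * (2 * X) \<le> h * U"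
    proof -
      have a1: "t * (- Q xs t - Dq * t - h * Lu') \<ge> 0" using e2 tpos by simp
      have a2: "t * (t * LQ) \<ge> t * (- h * Lu')" using e3 tpos by (intro mult_left_mono) auto
      have e1': "Dq = 2 * X + LQ" using e1 by simp
      have "t\<^sup>2 * (2 * X) = t * t * Dq - t * (t * LQ)" unfolding e1' by (simp add: power2_eq_square algebra_simps)
      also have "\<dots> \<le> t * t * Dq - t * (- h * Lu')" using a2 by linarith
      also have "\<dots> \<le> h * U"
      proof -
        have "t * (- Q xs t - Dq * t - h * Lu') = - t * Q xs t - t * t * Dq - t * h * Lu'"
          by (simp add: algebra_simps)
        then show ?thesis using a1 hdef unfolding U_def by (simp add: algebra_simps)
      qed
      finally show ?thesis .
    qed
    have sqLf: "t\<^sup>2 * Lf\<^sup>2 = h\<^sup>2 * U"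
    proof -
      have "(h * U)\<^sup>2 = t\<^sup>2 * Lf\<^sup>2 * (f xs)\<^sup>2" using e6 by (simp add: power2_eq_square algebra_simps)
      then have "h\<^sup>2 * U * U = t\<^sup>2 * Lf\<^sup>2 * U" using fU by (simp add: power2_eq_square algebra_simps)
      then show ?thesis using U0 by simp
    qed
    have stepB: "(2 / n) * h\<^sup>2 * U - K * t\<^sup>2 * U * C \<le> t\<^sup>2 * (2 * X)"
    proof -
      have "t\<^sup>2 * (2 * ((1 / n) * Lf\<^sup>2 - K * G)) \<le> t\<^sup>2 * (2 * X)"
        using e4 by (intro mult_left_mono) auto
      moreover have "t\<^sup>2 * (2 * ((1 / n) * Lf\<^sup>2 - K * G)) = (2 / n) * (t\<^sup>2 * Lf\<^sup>2) - 2 * K * t\<^sup>2 * G"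
        by (simp add: algebra_simps)
      moreover have "2 * K * t\<^sup>2 * G \<le> 2 * K * t\<^sup>2 * (U * C / 2)"
        using e5 K_pos by (intro mult_left_mono) auto
      ultimately show ?thesis using sqLf by (simp add: algebra_simps)
    qed
    have stepC: "h\<^sup>2 \<le> n / 2 * h + B * t\<^sup>2"
    proof -
      have "(2 / n) * h\<^sup>2 * U - K * t\<^sup>2 * U * C \<le> h * U" using stepA stepB by linarith
      then have "U * ((2 / n) * h\<^sup>2 - K * t\<^sup>2 * C) \<le> U * h" by (simp add: algebra_simps)
      then have "(2 / n) * h\<^sup>2 - K * t\<^sup>2 * C \<le> h" using U0 by simp
      then have "n / 2 * ((2 / n) * h\<^sup>2 - K * t\<^sup>2 * C) \<le> n / 2 * h" using n_pos
        by (intro mult_left_mono) auto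
      then show ?thesis unfolding BC using n_pos by (simp add: algebra_simps)
    qed
    have stepD: "h \<le> n / 2 + t * sqrt B"
    proof (rule ccontr)
      assume "\<not> ?thesis"
      then have c: "h > n / 2 + t * sqrt B" by simp
      have sB: "t * sqrt B \<ge> 0" using B0 tpos by simp
      have "h * (h - n / 2) > (n / 2 + t * sqrt B) * (t * sqrt B)"
      proof -
        have "h * (h - n / 2) \<ge> h * (t * sqrt B)" using c hpos by (intro mult_left_mono) auto
        moreover have "h * (t * sqrt B) \<ge> (n / 2 + t * sqrt B) * (t * sqrt B)"
          using c sB by (intro mult_right_mono) auto
        moreover have "h * (h - n / 2) > h * (t * sqrt B)" using c hpos by simp
        ultimately show ?thesis by linarith
      qed
      moreover have "(n / 2 + t * sqrt B) * (t * sqrt B) \<ge> B * t\<^sup>2"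
      proof -
        have "(t * sqrt B) * (t * sqrt B) = B * t\<^sup>2" using B0 by (simp add: power2_eq_square algebra_simps)
        moreover have "n / 2 * (t * sqrt B) \<ge> 0" using n_pos sB by simp
        ultimately show ?thesis by (simp add: algebra_simps)
      qed
      ultimately show False using stepC by (simp add: algebra_simps power2_eq_square)
    qed
    have "t * sqrt B \<le> T * sqrt B" using t0 B0 by (intro mult_right_mono) auto
    then show ?thesis using H0T stepD by linarith
  qed
  have TV: "u x0 T > 0" using u_pos x0 T by auto
  define g where "g = (\<lambda>y. sqrt (u y T))"
  have gpos: "\<And>y. y \<in> V \<Longrightarrow> g y > 0" unfolding g_def using u_pos T by auto
  have gg: "\<And>y. y \<in> V \<Longrightarrow> g y * g y = u y T" unfolding g_def using u_pos T
    by (simp add: less_imp_le)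
  have LuT: "?L (\<lambda>y. g y * g y) x0 = ut x0 T"
  proof -
    have "?L (\<lambda>y. g y * g y) x0 = ?L (\<lambda>y. u y T) x0" by (rule lap_cong[OF gg x0])
    then show ?thesis using heat[OF x0 less_imp_le[OF T]] by simp
  qed
  have dv: "deriv (\<lambda>s. sqrt (u x0 s)) T = ut x0 T / (2 * sqrt (u x0 T))"
    by (rule DERIV_imp_deriv[OF dsq[OF x0 T]])
  have GT: "?G g g x0 = (ut x0 T - 2 * g x0 * ?L g x0) / 2" unfolding Gam_def using LuT by simp
  have HT: "H x0 T = - T * (g x0 * ?L g x0) / u x0 T" unfolding H_def Q_def F_def g_def by simp
  have lhs: "?G g g x0 / u x0 T - deriv (\<lambda>s. sqrt (u x0 s)) T / sqrt (u x0 T) = H x0 T / T"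
  proof -
    have sq: "sqrt (u x0 T) * sqrt (u x0 T) = u x0 T" using TV by (simp add: less_imp_le)
    have "deriv (\<lambda>s. sqrt (u x0 s)) T / sqrt (u x0 T) = ut x0 T / (2 * u x0 T)"
      unfolding dv using sq by (simp add: field_simps)
    then show ?thesis unfolding GT HT using TV T by (simp add: field_simps)
  qed
  have "H x0 T / T \<le> (n / 2 + T * sqrt B) / T" using key T by (simp add: divide_right_mono)
  also have "\<dots> = n / (2 * T) + sqrt B" using T by (simp add: field_simps)
  finally show "?G (\<lambda>y. sqrt (u y T)) (\<lambda>y. sqrt (u y T)) x0 / u x0 T
       - deriv (\<lambda>s. sqrt (u x0 s)) T / sqrt (u x0 T)
     \<le> n / (2 * T) + sqrt (1/2 * n * K * D_mu V E w mu * (D_w V E w + 1))"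
    using lhs unfolding g_def B_def by simp
qed

end
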